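(* Let $\mathcal{W}$ be a $d_2$-dimensional subspace of $\mathbb{R}^n$ and $\mathcal{S}$ a $d_1$-dimensional subspace of $\mathbb{R}^n$ with $d_1 \le d_2$. Let $\mathbf{W} \in \mathbb{R}^{n\times d_2}$ and $\mathbf{S} \in \mathbb{R}^{n\times d_1}$ be matrices whose columns are orthonormal bases of $\mathcal{W}$ and $\mathcal{S}$, and let $\mathbf{W}^\top \mathbf{S} = \mathbf{U}\mathbf{\Sigma}\mathbf{V}^\top$ be a (thin) singular value decomposition with $\mathbf{U} \in \mathbb{R}^{d_2\times d_1}$ having orthonormal columns, $\mathbf{\Sigma} \in \mathbb{R}^{d_1\times d_1}$ diagonal with nonnegative entries, and $\mathbf{V} \in \mathbb{R}^{d_1\times d_1}$ orthogonal. Then the $d_1$-dimensional subspace $\mathcal{S}' = \mathrm{span}(\mathbf{W}\mathbf{U})$, which is contained in $\mathcal{W}$, is a subspace projection of $\mathcal{S}$ onto $\mathcal{W}$, i.e. $$\mathcal{S}' \in \underset{\mathcal{S}'' \subseteq \mathcal{W},\ \dim \mathcal{S}'' = d_1}{\operatorname{argmin}}\ \rho(\mathcal{S}, \mathcal{S}''),$$ where $\rho$ denotes the geodesic distance on the Grassmann manifold $\mathsf{Gr}(d_1, n)$.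
   Context: The Grassmann manifold $\mathsf{Gr}(d,n)$ is the set of $d$-dimensional linear subspaces of $\mathbb{R}^n$. The geodesic distance between two $d$-dimensional subspaces $\mathcal{A}, \mathcal{B}$ is $\rho(\mathcal{A},\mathcal{B}) = \big(\sum_{i=1}^{d} \theta_i^2\big)^{1/2}$, where $\theta_1,\dots,\theta_d \in [0,\pi/2]$ are the canonical angles between $\mathcal{A}$ and $\mathcal{B}$ (the arccosines of the singular values of $\mathbf{A}^\top\mathbf{B}$ for orthonormal basis matrices $\mathbf{A},\mathbf{B}$). The subspace projection $\omega(\mathcal{S})$ of a $d_1$-dimensional subspace $\mathcal{S}$ onto a $d_2$-dimensional subspace $\mathcal{W}$ ($d_2 \ge d_1$) is defined as a $d_1$-dimensional subspace $\mathcal{S}' \subseteq \mathcal{W}$ minimizing $\rho(\mathcal{S}, \mathcal{S}')$. *)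

theory Defs
  imports "HOL-Analysis.Analysis"
begin

text \<open>Subspaces of R^n are sets of vectors of type real^'n. A matrix with k rows and
d columns is of type real^'d^'k.\<close>

definition onb_matrix :: "real^'d^'n \<Rightarrow> (real^'n) set \<Rightarrow> bool" where
  "onb_matrix A X \<longleftrightarrow> transpose A ** A = mat 1 \<and> span (columns A) = X"

definition is_svd :: "real^'d^'k \<Rightarrow> real^'d^'k \<Rightarrow> real^'d^'d \<Rightarrow> real^'d^'d \<Rightarrow> bool" where
  "is_svd M U Sig V \<longleftrightarrow>
     transpose U ** U = mat 1 \<and>
     (\<forall>i j. i \<noteq> j \<longrightarrow> Sig $ i $ j = 0) \<and> (\<forall>i. Sig $ i $ i \<ge> 0) \<and>
     transpose V ** V = mat 1 \<and> V ** transpose V = mat 1 \<and>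
     M = U ** Sig ** transpose V"

text \<open>Geodesic distance on Gr(d,n), d = CARD('d): canonical angles are arccos of the
singular values of A^T B for orthonormal basis matrices A, B (the value is independent of
the choices, so Hilbert choice picks the well-defined quantity).\<close>
definition grassmann_dist :: "'d::finite itself \<Rightarrow> (real^'n) set \<Rightarrow> (real^'n) set \<Rightarrow> real" where
  "grassmann_dist _ X Y = (SOME r. \<exists>(A::real^'d^'n) (B::real^'d^'n) (U::real^'d^'d) Sig V.
      onb_matrix A X \<and> onb_matrix B Y \<and> is_svd (transpose A ** B) U Sig V \<and>
      r = sqrt (\<Sum>i\<in>UNIV. (arccos (Sig $ i $ i))\<^sup>2))"

definition is_subspace_projection ::
  "'d::finite itself \<Rightarrow> (real^'n) set \<Rightarrow> (real^'n) set \<Rightarrow> (real^'n) set \<Rightarrow> bool" where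
  "is_subspace_projection t S W S' \<longleftrightarrow>
     subspace S' \<and> S' \<subseteq> W \<and> dim S' = CARD('d) \<and>
     (\<forall>S''. subspace S'' \<and> S'' \<subseteq> W \<and> dim S'' = CARD('d) \<longrightarrow>
        grassmann_dist t S S' \<le> grassmann_dist t S S'')"

end

theory Submission imports Defs begin

declare transpose_matrix_vector[simp del] vector_transpose_matrix[simp del]

lemma dot_transpose: "(transpose A *v x) \<bullet> (y::real^_) = x \<bullet> (A *v y)"
  by (metis dot_lmul_matrix transpose_matrix_vector)

definition mkc :: "('d::finite \<Rightarrow> real^'n) \<Rightarrow> real^'d^'n" where
  "mkc g = (\<chi> k i. g i $ k)"

lemma column_mkc[simp]: "column i (mkc g) = g i"
  by (simp add: mkc_def column_def vec_eq_iff)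

lemma columns_mkc: "columns (mkc g) = range g"
  by (auto simp: columns_def)

lemma mkc_mult: "mkc g *v x = (\<Sum>i\<in>UNIV. x$i *\<^sub>R g i)"
  by (simp add: mkc_def matrix_vector_mult_def vec_eq_iff sum_component mult.commute)

lemma tmm_entry: "(transpose A ** A) $ i $ j = column i A \<bullet> column j A"
  by (simp add: matrix_matrix_mult_def transpose_def column_def inner_vec_def mult.commute)

lemma mat1_entry: "(mat 1 :: real^'d^'d) $ i $ j = (if i = j then 1 else 0)"
  by (simp add: mat_def)

lemma ortho_cols_iff:
  fixes A :: "real^'d^'n"
  shows "transpose A ** A = mat 1 \<longleftrightarrow> (\<forall>i j. column i A \<bullet> column j A = (if i = j then 1 else 0))"
  by (simp add: vec_eq_iff tmm_entry mat1_entry)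

lemma mult_in_span_columns: "(A::real^'d^'n) *v x \<in> span (columns A)"
  unfolding matrix_mult_sum scalar_mult_eq_scaleR
  by (intro span_sum span_scale span_base) (auto simp: columns_def)

lemma norm_onb_mult:
  fixes A :: "real^'d^'n"
  assumes "transpose A ** A = mat 1"
  shows "norm (A *v u) = norm u"
proof -
  have "(A *v u) \<bullet> (A *v u) = u \<bullet> ((transpose A ** A) *v u)"
    by (metis dot_transpose transpose_transpose matrix_vector_mul_assoc)
  then have "(A *v u) \<bullet> (A *v u) = u \<bullet> u" using assms by simp
  then show ?thesis by (simp add: norm_eq_sqrt_inner)
qed

lemma onb_proj_id:
  fixes A :: "real^'d^'n"
  assumes "transpose A ** A = mat 1" "z \<in> span (columns A)"
  shows "A *v (transpose A *v z) = z"
proof -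
  have "span (columns A) \<subseteq> {z. A *v (transpose A *v z) = z}"
  proof (rule span_minimal)
    show "columns A \<subseteq> {z. A *v (transpose A *v z) = z}"
    proof
      fix c assume "c \<in> columns A"
      then obtain i where c: "c = column i A" by (auto simp: columns_def)
      have "c = A *v axis i 1" using c
        by (simp add: vec_eq_iff matrix_vector_mult_def column_def axis_def if_distrib cong: if_cong)
      then have "A *v (transpose A *v c) = A *v ((transpose A ** A) *v axis i 1)"
        by (simp add: matrix_vector_mul_assoc)
      also have "\<dots> = c" using assms(1) \<open>c = A *v axis i 1\<close> by simp
      finally show "c \<in> {z. A *v (transpose A *v z) = z}" by simp
    qed
    show "subspace {z. A *v (transpose A *v z) = z}"
      by (auto simp: subspace_def matrix_vector_right_distrib matrix_vector_mult_scaleR)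
  qed
  then show ?thesis using assms(2) by auto
qed

lemma norm_onb_tmult_le:
  fixes A :: "real^'d^'n"
  assumes "transpose A ** A = mat 1"
  shows "norm (transpose A *v z) \<le> norm z"
proof -
  let ?u = "transpose A *v z"
  have "?u \<bullet> ?u = (A *v ?u) \<bullet> z"
    by (metis dot_transpose inner_commute transpose_transpose)
  also have "\<dots> \<le> norm (A *v ?u) * norm z" by (rule Cauchy_Schwarz_ineq2[THEN order_trans[OF abs_ge_self]])
  also have "\<dots> = norm ?u * norm z" using norm_onb_mult[OF assms] by simp
  finally have "norm ?u * norm ?u \<le> norm ?u * norm z" by (simp add: norm_eq_sqrt_inner flip: power2_eq_square)
  then show ?thesis
    by (metis mult_le_cancel_left norm_ge_zero order.trans mult_zero_left linorder_not_less  nle_le)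
qed

lemma tmult_comp: "(transpose P *v x) $ j = column j P \<bullet> (x::real^_)"
  by (simp add: matrix_vector_mult_def transpose_def column_def inner_vec_def)

lemma sum_sq_norm: "(\<Sum>i\<in>UNIV. ((c::real^'d) $ i)^2) = (norm c)^2"
  unfolding power2_norm_eq_inner inner_vec_def by (simp add: power2_eq_square)

lemma ortho_cols_facts:
  fixes P :: "real^'d^'n"
  assumes "transpose P ** P = mat 1"
  shows "inj (\<lambda>i. column i P)" "independent ((\<lambda>i. column i P) ` I)"
    "dim (span ((\<lambda>i. column i P) ` I)) = card I"
proof -
  have o: "\<And>i j. column i P \<bullet> column j P = (if i = j then 1 else 0)"
    using assms ortho_cols_iff by blast
  show inj: "inj (\<lambda>i. column i P)"
  proof (rule injI)
    fix i j assume "column i P = column j P"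
    then have "column i P \<bullet> column j P = 1" using o[of i i] by simp
    then show "i = j" using o[of i j] by (auto split: if_splits)
  qed
  show ind: "independent ((\<lambda>i. column i P) ` I)"
  proof (rule pairwise_orthogonal_independent)
    show "pairwise orthogonal ((\<lambda>i. column i P) ` I)"
      using o by (auto simp: pairwise_def orthogonal_def)
    show "0 \<notin> (\<lambda>i. column i P) ` I"
      using o by (metis (no_types, lifting) image_iff inner_zero_left zero_neq_one)
  qed
  show "dim (span ((\<lambda>i. column i P) ` I)) = card I"
    using dim_eq_card_independent[OF ind] card_image[OF inj_on_subset[OF inj]] by simp
qed

lemma count_le:
  fixes P P' :: "real^'d^'d" and d d' :: "'d \<Rightarrow> real"
  assumes P1: "transpose P ** P = mat 1" and P2: "P ** transpose P = mat 1"
    and P1': "transpose P' ** P' = mat 1" and P2': "P' ** transpose P' = mat 1"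
    and Q: "\<And>x. (\<Sum>i\<in>UNIV. d i * ((transpose P *v x)$i)^2)
                 \<le> (\<Sum>i\<in>UNIV. d' i * ((transpose P' *v x)$i)^2)"
  shows "card {i. t \<le> d i} \<le> card {i. t \<le> d' i}"
proof (rule ccontr)
  assume neg: "\<not> ?thesis"
  define I where "I = {i. t \<le> d i}"
  define J where "J = {i. d' i < t}"
  have cJ: "card J + card {i. t \<le> d' i} = CARD('d)"
  proof -
    have "J \<union> {i. t \<le> d' i} = UNIV" "J \<inter> {i. t \<le> d' i} = {}" by (auto simp: J_def)
    then show ?thesis using card_Un_disjoint[of J "{i. t \<le> d' i}"] by simp
  qed
  define S1 where "S1 = span ((\<lambda>i. column i P) ` I)"
  define S2 where "S2 = span ((\<lambda>i. column i P') ` J)"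
  have d1: "dim S1 = card I" unfolding S1_def using ortho_cols_facts(3)[OF P1] .
  have d2: "dim S2 = card J" unfolding S2_def using ortho_cols_facts(3)[OF P1'] .
  have "dim {x + y |x y. x \<in> S1 \<and> y \<in> S2} + dim (S1 \<inter> S2) = dim S1 + dim S2"
    by (rule dim_sums_Int) (auto simp: S1_def S2_def)
  moreover have "dim {x + y |x y. x \<in> S1 \<and> y \<in> S2} \<le> CARD('d)"
    using dim_subset_UNIV[where 'a="real^'d"] by simp
  moreover have "card {i. t \<le> d' i} < card I" using neg unfolding I_def by simp
  ultimately have "dim (S1 \<inter> S2) \<noteq> 0" using d1 d2 cJ by linarith
  then have "\<not> (S1 \<inter> S2 \<subseteq> {0})" using dim_eq_0[of "S1 \<inter> S2"] by simp
  then obtain x where x: "x \<in> S1" "x \<in> S2" "x \<noteq> 0" by auto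
  define c where "c = transpose P *v x"
  define c' where "c' = transpose P' *v x"
  have nc: "norm c = norm x"
    unfolding c_def by (rule norm_onb_mult) (simp add: P2)
  have nc': "norm c' = norm x"
    unfolding c'_def by (rule norm_onb_mult) (simp add: P2')
  have c0: "c $ j = 0" if "j \<notin> I" for j
  proof -
    have "orthogonal (column j P) x"
    proof (rule orthogonal_to_span)
      show "x \<in> span ((\<lambda>i. column i P) ` I)" using x(1) S1_def by simp
      fix y assume "y \<in> (\<lambda>i. column i P) ` I"
      then obtain i where "i \<in> I" "y = column i P" by auto
      moreover have "column j P \<bullet> column i P = (if j = i then 1 else 0)"
        using P1 ortho_cols_iff by blast
      ultimately show "orthogonal (column j P) y" using that \<open>i \<in> I\<close>
        by (auto simp: orthogonal_def)
    qed
    then show ?thesis by (simp add: c_def tmult_comp orthogonal_def)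
  qed
  have c0': "c' $ j = 0" if "j \<notin> J" for j
  proof -
    have "orthogonal (column j P') x"
    proof (rule orthogonal_to_span)
      show "x \<in> span ((\<lambda>i. column i P') ` J)" using x(2) S2_def by simp
      fix y assume "y \<in> (\<lambda>i. column i P') ` J"
      then obtain i where "i \<in> J" "y = column i P'" by auto
      moreover have "column j P' \<bullet> column i P' = (if j = i then 1 else 0)"
        using P1' ortho_cols_iff by blast
      ultimately show "orthogonal (column j P') y" using that \<open>i \<in> J\<close>
        by (auto simp: orthogonal_def)
    qed
    then show ?thesis by (simp add: c'_def tmult_comp orthogonal_def)
  qed
  have "0 \<le> (\<Sum>i\<in>UNIV. (d i - t) * (c $ i)^2)"
  proof (rule sum_nonneg)
    fix i show "0 \<le> (d i - t) * (c$i)^2"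
    proof (cases "i \<in> I")
      case True then show ?thesis by (simp add: I_def)
    next
      case False then show ?thesis by (simp add: c0)
    qed
  qed
  then have L: "t * (norm x)^2 \<le> (\<Sum>i\<in>UNIV. d i * (c $ i)^2)"
  proof -
    have e: "(\<Sum>i\<in>UNIV. (c$i)^2) = (norm x)^2" using sum_sq_norm[of c] nc by simp
    have "(\<Sum>i\<in>UNIV. (d i - t) * (c $ i)^2) = (\<Sum>i\<in>UNIV. d i * (c $ i)^2) - t * (\<Sum>i\<in>UNIV. (c$i)^2)"
      by (simp add: left_diff_distrib sum_subtractf sum_distrib_left)
    then show ?thesis using \<open>0 \<le> (\<Sum>i\<in>UNIV. (d i - t) * (c $ i)^2)\<close> unfolding e by linarith
  qed
  have "c' \<noteq> 0" using x(3) nc' by auto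
  then have "\<exists>j. c' $ j \<noteq> 0" by (simp add: vec_eq_iff)
  then obtain j where j: "c' $ j \<noteq> 0" by blast
  have "0 < (\<Sum>i\<in>UNIV. (t - d' i) * (c' $ i)^2)"
  proof (rule sum_pos2[where i=j])
    have "d' j < t" using j c0'[of j] unfolding J_def by blast
    then show "0 < (t - d' j) * (c' $ j)^2" using j by simp
    show "\<And>i. i \<in> UNIV \<Longrightarrow> 0 \<le> (t - d' i) * (c' $ i)^2"
    proof -
      fix i show "0 \<le> (t - d' i) * (c'$i)^2"
      proof (cases "i \<in> J")
        case True then show ?thesis by (simp add: J_def)
      next
        case False then show ?thesis by (simp add: c0')
      qed
    qed
  qed auto
  then have R: "(\<Sum>i\<in>UNIV. d' i * (c' $ i)^2) < t * (norm x)^2"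
  proof -
    have e: "(\<Sum>i\<in>UNIV. (c'$i)^2) = (norm x)^2" using sum_sq_norm[of c'] nc' by simp
    have "(\<Sum>i\<in>UNIV. (t - d' i) * (c' $ i)^2) = t * (\<Sum>i\<in>UNIV. (c'$i)^2) - (\<Sum>i\<in>UNIV. d' i * (c' $ i)^2)"
      by (simp add: left_diff_distrib sum_subtractf sum_distrib_left)
    then show ?thesis using \<open>0 < (\<Sum>i\<in>UNIV. (t - d' i) * (c' $ i)^2)\<close> unfolding e by linarith
  qed
  show False using L R Q[of x] unfolding c_def c'_def by linarith
qed


lemma count_sum_aux:
  fixes a :: "'a \<Rightarrow> real" and b :: "'b \<Rightarrow> real" and h :: "real \<Rightarrow> real"
  assumes hm: "\<And>x y. x \<in> R \<Longrightarrow> y \<in> R \<Longrightarrow> x \<le> y \<Longrightarrow> h y \<le> h x"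
  shows "finite I \<Longrightarrow> finite J \<Longrightarrow> card I = n \<Longrightarrow> card J = n \<Longrightarrow>
    (\<And>t. card {i\<in>I. t \<le> a i} \<le> card {j\<in>J. t \<le> b j}) \<Longrightarrow>
    a ` I \<subseteq> R \<Longrightarrow> b ` J \<subseteq> R \<Longrightarrow> (\<Sum>j\<in>J. h (b j)) \<le> (\<Sum>i\<in>I. h (a i))"
proof (induction n arbitrary: I J)
  case 0
  then show ?case by simp
next
  case (Suc n)
  have "I \<noteq> {}" using Suc.prems by auto
  have "J \<noteq> {}" using Suc.prems by auto
  have "Max (a ` I) \<in> a ` I" using Suc.prems(1) \<open>I \<noteq> {}\<close> by (intro Max_in) auto
  then obtain i0 where i0a: "i0 \<in> I" "a i0 = Max (a ` I)" by auto
  have i0: "i0 \<in> I" "\<And>i. i \<in> I \<Longrightarrow> a i \<le> a i0"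
    using i0a Suc.prems(1) by auto
  have "Max (b ` J) \<in> b ` J" using Suc.prems(2) \<open>J \<noteq> {}\<close> by (intro Max_in) auto
  then obtain j0 where j0a: "j0 \<in> J" "b j0 = Max (b ` J)" by auto
  have j0: "j0 \<in> J" "\<And>j. j \<in> J \<Longrightarrow> b j \<le> b j0"
    using j0a Suc.prems(2) by auto
  have "1 \<le> card {i\<in>I. a i0 \<le> a i}"
  proof -
    have "i0 \<in> {i\<in>I. a i0 \<le> a i}" using i0 by simp
    then have "{i\<in>I. a i0 \<le> a i} \<noteq> {}" by blast
    then show ?thesis using Suc.prems(1) by (simp add: Suc_le_eq card_gt_0_iff)
  qed
  then have "1 \<le> card {j\<in>J. a i0 \<le> b j}" using Suc.prems(5)[of "a i0"] by linarith
  then have "{j\<in>J. a i0 \<le> b j} \<noteq> {}" by (metis card.empty not_one_le_zero)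
  then obtain j1 where "j1 \<in> J" "a i0 \<le> b j1" by blast
  then have ab: "a i0 \<le> b j0" using j0 by (meson order_trans)
  have hh: "h (b j0) \<le> h (a i0)" using hm ab Suc.prems i0 j0 by blast
  have IH: "(\<Sum>j\<in>J - {j0}. h (b j)) \<le> (\<Sum>i\<in>I - {i0}. h (a i))"
  proof (rule Suc.IH)
    show "finite (I - {i0})" "finite (J - {j0})" using Suc.prems by auto
    show "card (I - {i0}) = n" "card (J - {j0}) = n" using Suc.prems i0 j0 by auto
    show "a ` (I - {i0}) \<subseteq> R" "b ` (J - {j0}) \<subseteq> R" using Suc.prems by auto
    fix t
    show "card {i \<in> I - {i0}. t \<le> a i} \<le> card {j \<in> J - {j0}. t \<le> b j}"
    proof (cases "t \<le> a i0")
      case True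
      have e1: "{i \<in> I - {i0}. t \<le> a i} = {i\<in>I. t \<le> a i} - {i0}" by auto
      have e2: "{j \<in> J - {j0}. t \<le> b j} = {j\<in>J. t \<le> b j} - {j0}" by auto
      have "i0 \<in> {i\<in>I. t \<le> a i}" using True i0 by auto
      moreover have "j0 \<in> {j\<in>J. t \<le> b j}" using True ab j0 by auto
      ultimately show ?thesis unfolding e1 e2 using Suc.prems(1,2) Suc.prems(5)[of t]
        by (simp add: card_Diff_singleton)
    next
      case False
      then have e: "{i \<in> I - {i0}. t \<le> a i} = {}" using i0 by force
      show ?thesis unfolding e by simp
    qed
  qed
  have "(\<Sum>j\<in>J. h (b j)) = h (b j0) + (\<Sum>j\<in>J - {j0}. h (b j))"
    using Suc.prems(2) j0 by (simp add: sum.remove)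
  moreover have "(\<Sum>i\<in>I. h (a i)) = h (a i0) + (\<Sum>i\<in>I - {i0}. h (a i))"
    using Suc.prems(1) i0 by (simp add: sum.remove)
  ultimately show ?case using IH hh by linarith
qed


lemma sym_dot:
  fixes K :: "real^'d^'d"
  assumes "transpose K = K"
  shows "x \<bullet> (K *v y) = (K *v x) \<bullet> y"
  using dot_transpose[of K x y] assms by simp

lemma quad_zero:
  fixes b c :: real
  assumes c: "c \<ge> 0" and b: "b \<ge> 0" and h: "\<And>s. 2 * s * b \<le> s^2*c"
  shows "b = 0"
proof (rule ccontr)
  assume "b \<noteq> 0"
  then have bp: "b > 0" using b by simp
  define s where "s = b / (c+1)"
  have sp: "s > 0" using bp c by (simp add: s_def)
  have "2 * s * b \<le> s^2*c" by (rule h)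
  then have "s * (2*b) \<le> s * (s*c)" by (simp add: power2_eq_square algebra_simps)
  then have "2*b \<le> s*c" using sp by simp
  also have "s*c = b * (c/(c+1))" by (simp add: s_def)
  also have "\<dots> < b * 1" using bp c by (intro mult_strict_left_mono) auto
  finally show False using bp by simp
qed

lemma eigen_exists:
  fixes K :: "real^'d^'d"
  assumes sym: "transpose K = K" and X: "subspace X" and inv: "\<And>x. x \<in> X \<Longrightarrow> K *v x \<in> X"
    and ne: "X \<noteq> {0}"
  shows "\<exists>v\<in>X. norm v = 1 \<and> (\<exists>l. K *v v = l *\<^sub>R v)"
proof -
  define T where "T = sphere (0::real^'d) 1 \<inter> X"
  have cT: "compact T" unfolding T_def
    by (intro compact_Int_closed compact_sphere closed_subspace X)
  obtain x0 where x0: "x0 \<in> X" "x0 \<noteq> 0" using ne X subspace_0 by blast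
  have "x0 /\<^sub>R norm x0 \<in> T" using x0 X by (auto simp: T_def subspace_scale)
  then have neT: "T \<noteq> {}" by blast
  have "continuous_on T (\<lambda>x. x \<bullet> (K *v x))"
    by (intro continuous_intros)
  then obtain v where v: "v \<in> T" and vmax: "\<And>y. y \<in> T \<Longrightarrow> y \<bullet> (K *v y) \<le> v \<bullet> (K *v v)"
    using continuous_attains_sup[OF cT neT] by blast
  define l where "l = v \<bullet> (K *v v)"
  have vX: "v \<in> X" and nv: "norm v = 1" using v by (auto simp: T_def)
  have vv: "v \<bullet> v = 1" using nv by (simp add: norm_eq_sqrt_inner)
  have bound: "x \<bullet> (K *v x) \<le> l * (x \<bullet> x)" if "x \<in> X" for x
  proof (cases "x = 0")
    case True then show ?thesis by simp
  next
    case False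
    define y where "y = x /\<^sub>R norm x"
    have "y \<in> T" using that False X by (auto simp: T_def y_def subspace_scale)
    then have "y \<bullet> (K *v y) \<le> l" using vmax l_def by blast
    moreover have "y \<bullet> (K *v y) = (x \<bullet> (K *v x)) / (norm x)^2"
      using False by (simp add: y_def matrix_vector_mult_scaleR power2_eq_square field_simps)
    moreover have "(norm x)^2 = x \<bullet> x" by (simp add: power2_norm_eq_inner)
    moreover have "(norm x)^2 > 0" using False by simp
    ultimately show ?thesis by (simp add: divide_le_eq mult.commute)
  qed
  define w where "w = K *v v - l *\<^sub>R v"
  have wX: "w \<in> X" using inv[OF vX] vX X by (simp add: w_def subspace_diff subspace_scale)
  have sv: "v \<bullet> (K *v w) = w \<bullet> (K *v v)"
    using sym_dot[OF sym, of v w] by (simp add: inner_commute)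
  have b_eq: "w \<bullet> (K *v v) - l * (v \<bullet> w) = w \<bullet> w"
    by (simp add: w_def inner_diff_left inner_diff_right inner_commute algebra_simps vv)
  have key: "2 * s * (w \<bullet> w) \<le> s^2 * (l * (w \<bullet> w) - w \<bullet> (K *v w))" for s
  proof -
    have "v + s *\<^sub>R w \<in> X" using vX wX X by (simp add: subspace_add subspace_scale)
    then have bnd: "(v + s *\<^sub>R w) \<bullet> (K *v (v + s *\<^sub>R w)) \<le> l * ((v + s *\<^sub>R w) \<bullet> (v + s *\<^sub>R w))"
      by (rule bound)
    have q2: "(v + s *\<^sub>R w) \<bullet> (K *v (v + s *\<^sub>R w)) = l + 2 * s * (w \<bullet> (K *v v)) + s^2 * (w \<bullet> (K *v w))"
      using sv by (simp add: matrix_vector_right_distrib matrix_vector_mult_scaleR inner_add_left inner_add_right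
          l_def power2_eq_square algebra_simps)
    have q3: "(v + s *\<^sub>R w) \<bullet> (v + s *\<^sub>R w) = 1 + 2 * s * (v \<bullet> w) + s^2 * (w \<bullet> w)"
      using vv by (simp add: inner_add_left inner_add_right inner_commute power2_eq_square algebra_simps)
    have b2: "l + 2 * s * (w \<bullet> (K *v v)) + s^2 * (w \<bullet> (K *v w)) \<le> l * (1 + 2 * s * (v \<bullet> w) + s^2 * (w \<bullet> w))"
      using bnd unfolding q2 q3 .
    have e1: "l * (1 + 2 * s * (v \<bullet> w) + s^2 * (w \<bullet> w)) = l + 2 * s * (l * (v \<bullet> w)) + s^2 * (l * (w \<bullet> w))"
      by (simp add: algebra_simps)
    have e2: "2 * s * (w \<bullet> (K *v v) - l * (v \<bullet> w)) = 2 * s * (w \<bullet> (K *v v)) - 2 * s * (l * (v \<bullet> w))"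
      by (simp add: algebra_simps)
    have e3: "s^2 * (l * (w \<bullet> w) - w \<bullet> (K *v w)) = s^2 * (l * (w \<bullet> w)) - s^2 * (w \<bullet> (K *v w))"
      by (simp add: algebra_simps)
    have "2 * s * (w \<bullet> (K *v v) - l * (v \<bullet> w)) \<le> s^2 * (l * (w \<bullet> w) - w \<bullet> (K *v w))"
      using b2 unfolding e1 e2 e3 by linarith
    then show ?thesis using b_eq by simp
  qed
  have "w \<bullet> w = 0"
    by (rule quad_zero[OF _ _ key]) (use bound[OF wX] in auto)
  then have "K *v v = l *\<^sub>R v" by (simp add: w_def)
  then show ?thesis using vX nv by blast
qed

lemma eigenbasis:
  fixes K :: "real^'d^'d"
  assumes sym: "transpose K = K"
  shows "subspace X \<Longrightarrow> (\<And>x. x \<in> X \<Longrightarrow> K *v x \<in> X) \<Longrightarrow>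
    \<exists>E. E \<subseteq> X \<and> pairwise orthogonal E \<and> (\<forall>e\<in>E. norm e = 1) \<and> span E = X \<and>
        (\<forall>e\<in>E. \<exists>l. K *v e = l *\<^sub>R e)"
proof (induction "dim X" arbitrary: X rule: less_induct)
  case less
  show ?case
  proof (cases "X = {0}")
    case True
    then show ?thesis by (intro exI[of _ "{}"]) auto
  next
    case False
    obtain v l where vX: "v \<in> X" and nv: "norm v = 1" and ev: "K *v v = l *\<^sub>R v"
      using eigen_exists[OF sym less.prems(1) less.prems(2) False] by blast
    have vv: "v \<bullet> v = 1" using nv by (simp add: norm_eq_sqrt_inner)
    define X' where "X' = {x\<in>X. v \<bullet> x = 0}"
    have sX': "subspace X'"
      using less.prems(1) unfolding X'_def subspace_def by (auto simp: inner_add_right)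
    have iX': "K *v x \<in> X'" if "x \<in> X'" for x
    proof -
      have "v \<bullet> (K *v x) = (K *v v) \<bullet> x" by (rule sym_dot[OF sym])
      also have "\<dots> = 0" using that by (simp add: ev X'_def)
      finally show ?thesis using that less.prems(2) by (auto simp: X'_def)
    qed
    have "v \<notin> X'" using vv by (simp add: X'_def)
    moreover have "X' \<subseteq> X" by (auto simp: X'_def)
    ultimately have "X' \<subset> X" using vX by blast
    then have "dim X' < dim X"
    proof -
      have s1: "span X' = X'" using sX' span_eq_iff by blast
      have s2: "span X = X" using less.prems(1) span_eq_iff by blast
      have "span X' \<subset> span X" unfolding s1 s2 by (rule \<open>X' \<subset> X\<close>)
      then show ?thesis by (rule dim_psubset)
    qed
    then obtain E' where E': "E' \<subseteq> X'" "pairwise orthogonal E'" "\<forall>e\<in>E'. norm e = 1" "span E' = X'"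
        "\<forall>e\<in>E'. \<exists>l. K *v e = l *\<^sub>R e"
      using less.hyps[OF _ sX' iX'] by blast
    define E where "E = insert v E'"
    have "E \<subseteq> X" using E'(1) vX by (auto simp: E_def X'_def)
    moreover have "pairwise orthogonal E"
      unfolding E_def using E'(1,2)
      by (auto simp: pairwise_insert orthogonal_def X'_def inner_commute)
    moreover have "\<forall>e\<in>E. norm e = 1" using E'(3) nv by (auto simp: E_def)
    moreover have "\<forall>e\<in>E. \<exists>l. K *v e = l *\<^sub>R e" using E'(5) ev by (auto simp: E_def)
    moreover have "span E = X"
    proof
      show "span E \<subseteq> X" using \<open>E \<subseteq> X\<close> less.prems(1) by (rule span_minimal)
      show "X \<subseteq> span E"
      proof
        fix x assume xX: "x \<in> X"
        have "x - (v \<bullet> x) *\<^sub>R v \<in> X'"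
          using xX vX less.prems(1) vv by (auto simp: X'_def subspace_diff subspace_scale inner_diff_right)
        then have "x - (v \<bullet> x) *\<^sub>R v \<in> span E" using E'(4) span_mono[of E' E] by (auto simp: E_def)
        moreover have "(v \<bullet> x) *\<^sub>R v \<in> span E" by (simp add: E_def span_base span_scale)
        ultimately have "(x - (v \<bullet> x) *\<^sub>R v) + (v \<bullet> x) *\<^sub>R v \<in> span E" by (rule span_add)
        then show "x \<in> span E" by simp
      qed
    qed
    ultimately show ?thesis by blast
  qed
qed


lemma card_basis_cart: "card (Basis :: (real^'d) set) = CARD('d)"
  by simp

lemma orthonormal_bij_mkc:
  fixes E :: "(real^'n) set"
  assumes "pairwise orthogonal E" "\<forall>e\<in>E. norm e = 1" "bij_betw g (UNIV::'d::finite set) E"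
  shows "transpose (mkc g) ** mkc g = mat 1"
proof -
  have "g i \<bullet> g j = (if i = j then 1 else 0)" for i j
  proof (cases "i = j")
    case True
    then show ?thesis using assms(2,3) by (auto simp: bij_betw_def norm_eq_1)
  next
    case False
    then have "g i \<noteq> g j" using assms(3) by (auto simp: bij_betw_def inj_def)
    moreover have "g i \<in> E" "g j \<in> E" using assms(3) by (auto simp: bij_betw_def)
    ultimately show ?thesis using assms(1) False by (auto simp: pairwise_def orthogonal_def)
  qed
  then show ?thesis by (simp add: ortho_cols_iff)
qed

lemma onb_exists:
  fixes X :: "(real^'n) set"
  assumes "subspace X" "dim X = CARD('d::finite)"
  shows "\<exists>A::real^'d^'n. onb_matrix A X"
proof -
  obtain B where B: "B \<subseteq> X" "pairwise orthogonal B" "\<And>x. x \<in> B \<Longrightarrow> norm x = 1"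
    "independent B" "card B = dim X" "span B = X"
    using orthonormal_basis_subspace[OF assms(1)] by metis
  have "finite B" using B(4) by (simp add: independent_imp_finite)
  then obtain g where g: "bij_betw g (UNIV::'d set) B"
    using finite_same_card_bij[of "UNIV::'d set" B] B(5) assms(2) by auto
  have "transpose (mkc g) ** mkc g = mat 1"
    using orthonormal_bij_mkc[OF B(2) _ g] B(3) by blast
  moreover have "span (columns (mkc g)) = X"
    using g B(6) by (simp add: columns_mkc bij_betw_def)
  ultimately show ?thesis unfolding onb_matrix_def by blast
qed

lemma col_mult: "(A ** B) $ k $ i = (A *v column i B) $ k"
  by (simp add: matrix_matrix_mult_def matrix_vector_mult_def column_def)

lemma dot_MM: "(M *v x) \<bullet> (M *v y) = x \<bullet> ((transpose M ** M) *v (y::real^_))"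
  using dot_transpose[of "transpose M" x "M *v y"] by (simp add: matrix_vector_mul_assoc)

lemma svd_exists:
  fixes M :: "real^'d^'d"
  shows "\<exists>U Sig V. is_svd M U Sig V"
proof -
  define K where "K = transpose M ** M"
  have sym: "transpose K = K" by (simp add: K_def matrix_transpose_mul)
  obtain E where E: "pairwise orthogonal E" "\<forall>e\<in>E. norm e = 1" "span E = UNIV"
      "\<forall>e\<in>E. \<exists>l. K *v e = l *\<^sub>R e"
    using eigenbasis[OF sym, of UNIV] subspace_UNIV by blast
  have "0 \<notin> E" using E(2) by auto
  then have indE: "independent E" using E(1) pairwise_orthogonal_independent by blast
  then have finE: "finite E" by (simp add: independent_imp_finite)
  have "card E = CARD('d)"
    using dim_eq_card_independent[OF indE] dim_span[of E] E(3) by simp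
  then obtain g where g: "bij_betw g (UNIV::'d set) E"
    using finite_same_card_bij[of "UNIV::'d set" E] finE by auto
  have V1: "transpose (mkc g) ** mkc g = mat 1" by (rule orthonormal_bij_mkc[OF E(1) E(2) g])
  have gorth: "g i \<bullet> g j = (if i = j then 1 else 0)" for i j
    using V1 ortho_cols_iff[of "mkc g"] by simp
  have "\<forall>i. \<exists>l. K *v g i = l *\<^sub>R g i" using E(4) g by (auto simp: bij_betw_def)
  then obtain lam where lam: "\<And>i. K *v g i = lam i *\<^sub>R g i" by metis
  have Mg: "(M *v g i) \<bullet> (M *v g j) = (if i = j then lam j else 0)" for i j
    using dot_MM[of M "g i" "g j"] lam[of j] gorth[of i j] by (simp add: K_def)
  have lam0: "lam i \<ge> 0" for i using Mg[of i i] by (metis inner_ge_zero)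
  define sig where "sig i = sqrt (lam i)" for i
  define Z where "Z = {i. lam i = 0}"
  define u0 where "u0 i = (1 / sig i) *\<^sub>R (M *v g i)" for i
  have u0orth: "u0 i \<bullet> u0 j = (if i = j then 1 else 0)" if "i \<notin> Z" "j \<notin> Z" for i j
  proof -
    have "u0 i \<bullet> u0 j = (1 / sig i) * (1 / sig j) * (if i = j then lam j else 0)"
      using Mg[of i j] by (simp add: u0_def)
    then show ?thesis using that lam0[of j] by (auto simp: sig_def Z_def)
  qed
  define F where "F = span (u0 ` (-Z))"
  have indF: "dim F = card (-Z)"
  proof -
    have inj: "inj_on u0 (-Z)"
    proof (rule inj_onI)
      fix i j assume "i \<in> -Z" "j \<in> -Z" "u0 i = u0 j"
      then show "i = j" using u0orth[of i j] u0orth[of i i] by (auto split: if_splits)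
    qed
    have "independent (u0 ` (-Z))"
    proof (rule pairwise_orthogonal_independent)
      show "pairwise orthogonal (u0 ` (-Z))"
        using u0orth by (auto simp: pairwise_def orthogonal_def)
      show "0 \<notin> u0 ` (-Z)"
      proof
        assume "0 \<in> u0 ` (-Z)"
        then obtain i where "i \<notin> Z" "u0 i = 0" by auto
        then show False using u0orth[of i i] by simp
      qed
    qed
    then show ?thesis
      unfolding F_def using dim_eq_card_independent card_image[OF inj] dim_span by metis
  qed
  define Y where "Y = {y \<in> UNIV. \<forall>x\<in>F. orthogonal x y}"
  have "dim Y + dim F = dim (UNIV :: (real^'d) set)"
    unfolding Y_def by (rule dim_subspace_orthogonal_to_vectors) (auto simp: F_def)
  moreover have "card Z + card (-Z) = CARD('d)"
  proof -
    have "Z \<union> -Z = UNIV" "Z \<inter> -Z = {}" by auto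
    then show ?thesis using card_Un_disjoint[of Z "-Z"] by simp
  qed
  ultimately have dY: "dim Y = card Z" using indF by simp
  have sY: "subspace Y" unfolding Y_def using subspace_orthogonal_to_vectors by simp
  obtain C where C: "C \<subseteq> Y" "pairwise orthogonal C" "\<And>x. x \<in> C \<Longrightarrow> norm x = 1"
    "independent C" "card C = dim Y"
    using orthonormal_basis_subspace[OF sY] by metis
  have "finite C" using C(4) by (simp add: independent_imp_finite)
  then obtain f where f: "bij_betw f Z C"
    using finite_same_card_bij[of Z C] C(5) dY by auto
  define u where "u i = (if i \<in> Z then f i else u0 i)" for i
  have uorth: "u i \<bullet> u j = (if i = j then 1 else 0)" for i j
  proof -
    have fC: "f i \<in> C" if "i \<in> Z" for i using f that by (auto simp: bij_betw_def)
    have u0F: "u0 i \<in> F" if "i \<notin> Z" for i using that by (auto simp: F_def span_base)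
    show ?thesis
    proof (cases "i \<in> Z")
      case iZ: True
      show ?thesis
      proof (cases "j \<in> Z")
        case True
        show ?thesis
        proof (cases "i = j")
          case True then show ?thesis using iZ fC C(3) by (simp add: u_def norm_eq_1)
        next
          case False
          then have "f i \<noteq> f j" using f iZ \<open>j \<in> Z\<close> by (auto simp: bij_betw_def inj_on_def)
          then show ?thesis using C(2) fC iZ \<open>j \<in> Z\<close> False
            by (auto simp: u_def pairwise_def orthogonal_def)
        qed
      next
        case False
        then have "orthogonal (u0 j) (f i)" using C(1) fC[OF iZ] u0F by (auto simp: Y_def)
        then show ?thesis using iZ False by (auto simp: u_def orthogonal_def inner_commute)
      qed
    next
      case iZ: False
      show ?thesis
      proof (cases "j \<in> Z")
        case True
        then have "orthogonal (u0 i) (f j)" using C(1) fC u0F iZ by (auto simp: Y_def)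
        then show ?thesis using iZ True by (auto simp: u_def orthogonal_def)
      next
        case False
        then show ?thesis using iZ u0orth by (simp add: u_def)
      qed
    qed
  qed
  define U where "U = mkc u"
  define V where "V = mkc g"
  define Sig :: "real^'d^'d" where "Sig = (\<chi> i j. if i = j then sig i else 0)"
  have U1: "transpose U ** U = mat 1" using uorth by (simp add: U_def ortho_cols_iff)
  have V2: "V ** transpose V = mat 1" using V1 matrix_left_right_inverse by (auto simp: V_def)
  have Mgi: "M *v g i = sig i *\<^sub>R u i" for i
  proof (cases "i \<in> Z")
    case True
    then have "(M *v g i) \<bullet> (M *v g i) = 0" using Mg[of i i] by (simp add: Z_def)
    then show ?thesis using True by (simp add: sig_def Z_def)
  next
    case False
    then have "sig i \<noteq> 0" by (simp add: sig_def Z_def)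
    then show ?thesis using False by (simp add: u_def u0_def)
  qed
  have MV: "M ** V = U ** Sig"
  proof -
    have "(M ** V) $ k $ i = (U ** Sig) $ k $ i" for k i
    proof -
      have "(M ** V) $ k $ i = (M *v g i) $ k" by (simp add: col_mult V_def)
      also have "\<dots> = sig i * u i $ k" by (simp add: Mgi)
      also have "\<dots> = (U ** Sig) $ k $ i"
        by (simp add: matrix_matrix_mult_def U_def Sig_def mkc_def if_distrib if_distribR cong: if_cong)
      finally show ?thesis .
    qed
    then show ?thesis by (simp add: vec_eq_iff)
  qed
  have "M = M ** (V ** transpose V)" using V2 by simp
  also have "\<dots> = (M ** V) ** transpose V" by (simp add: matrix_mul_assoc)
  also have "\<dots> = U ** Sig ** transpose V" by (simp add: MV)
  finally have "M = U ** Sig ** transpose V" .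
  moreover have "\<forall>i j. i \<noteq> j \<longrightarrow> Sig $ i $ j = 0" by (simp add: Sig_def)
  moreover have "\<forall>i. Sig $ i $ i \<ge> 0" using lam0 by (simp add: Sig_def sig_def)
  ultimately have "is_svd M U Sig V"
    unfolding is_svd_def using U1 V1 V2 by (simp add: V_def)
  then show ?thesis by blast
qed


lemma sq_inv: "transpose (U::real^'d^'d) ** U = mat 1 \<Longrightarrow> U ** transpose U = mat 1"
  using matrix_left_right_inverse by blast

lemma columns_range: "columns A = range (\<lambda>i. column i A)"
  by (auto simp: columns_def)

lemma column_mult: "column i (A ** B) = A *v column i B"
  by (simp add: vec_eq_iff col_mult column_def)

lemma diag_mult:
  fixes Sig :: "real^'d^'d"
  assumes "\<forall>i j. i \<noteq> j \<longrightarrow> Sig $ i $ j = 0"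
  shows "(Sig *v z) $ i = Sig $ i $ i * z $ i"
proof -
  have "(Sig *v z) $ i = (\<Sum>j\<in>UNIV. Sig $ i $ j * z $ j)" by (simp add: matrix_vector_mult_def)
  also have "\<dots> = (\<Sum>j\<in>{i}. Sig $ i $ j * z $ j)"
    by (rule sum.mono_neutral_right) (use assms in auto)
  finally show ?thesis by simp
qed

lemma svd_form:
  fixes M U Sig V :: "real^'d^'d"
  assumes "is_svd M U Sig V"
  shows "(norm (transpose M *v x))^2 = (\<Sum>i\<in>UNIV. (Sig$i$i)^2 * ((transpose U *v x)$i)^2)"
proof -
  have diag: "\<forall>i j. i \<noteq> j \<longrightarrow> Sig $ i $ j = 0" and V1: "transpose V ** V = mat 1"
    and MM: "M = U ** Sig ** transpose V" using assms by (auto simp: is_svd_def)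
  have "Sig $ j $ i = Sig $ i $ j" for i j using diag by (cases "i = j") auto
  then have tS: "transpose Sig = Sig" by (simp add: vec_eq_iff transpose_def)
  have "transpose M = V ** transpose Sig ** transpose U"
    by (simp add: MM matrix_transpose_mul matrix_mul_assoc)
  then have "transpose M *v x = V *v (Sig *v (transpose U *v x))"
    by (simp add: tS matrix_vector_mul_assoc[symmetric])
  then have "norm (transpose M *v x) = norm (Sig *v (transpose U *v x))"
    using norm_onb_mult[OF V1] by simp
  also have "(norm (Sig *v (transpose U *v x)))^2 = (\<Sum>i\<in>UNIV. ((Sig *v (transpose U *v x))$i)^2)"
    by (simp add: sum_sq_norm)
  also have "\<dots> = (\<Sum>i\<in>UNIV. (Sig$i$i)^2 * ((transpose U *v x)$i)^2)"
    by (simp add: diag_mult[OF diag] power_mult_distrib)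
  finally show ?thesis .
qed

lemma sig_le1:
  fixes A B :: "real^'d^'n" and U Sig V :: "real^'d^'d"
  assumes A: "onb_matrix A X" and B: "onb_matrix B Y" and s: "is_svd (transpose A ** B) U Sig V"
  shows "Sig $ i $ i \<le> 1" "Sig $ i $ i \<ge> 0"
proof -
  have U1: "transpose U ** U = mat 1" using s by (simp add: is_svd_def)
  have A1: "transpose A ** A = mat 1" using A by (simp add: onb_matrix_def)
  have B1: "transpose B ** B = mat 1" using B by (simp add: onb_matrix_def)
  show nn: "Sig $ i $ i \<ge> 0" using s by (simp add: is_svd_def)
  define x where "x = U *v axis i 1"
  have ux: "transpose U *v x = axis i 1"
    by (simp add: x_def matrix_vector_mul_assoc U1)
  have "(norm (transpose (transpose A ** B) *v x))^2 = (\<Sum>j\<in>UNIV. (Sig$j$j)^2 * ((axis i 1 :: real^'d)$j)^2)"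
    using svd_form[OF s, of x] ux by simp
  also have "\<dots> = (\<Sum>j\<in>{i}. (Sig$j$j)^2 * ((axis i 1 :: real^'d)$j)^2)"
    by (rule sum.mono_neutral_right) (auto simp: axis_def)
  also have "\<dots> = (Sig$i$i)^2" by (simp add: axis_def)
  finally have e: "(norm (transpose (transpose A ** B) *v x))^2 = (Sig$i$i)^2" .
  have "transpose (transpose A ** B) *v x = transpose B *v (A *v x)"
    by (simp add: matrix_transpose_mul matrix_vector_mul_assoc)
  then have "norm (transpose (transpose A ** B) *v x) \<le> norm (A *v x)"
    using norm_onb_tmult_le[OF B1] by simp
  also have "\<dots> = 1" using norm_onb_mult[OF A1] norm_onb_mult[OF U1] by (simp add: x_def)
  finally have "(Sig$i$i)^2 \<le> 1^2" using e
    by (metis norm_ge_zero power_mono)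
  then show "Sig $ i $ i \<le> 1" using nn by (simp add: power_le_one_iff abs_le_square_iff)
qed

lemma arccos_sq_antimono:
  fixes x y :: real
  assumes "x \<in> {0..1}" "y \<in> {0..1}" "x \<le> y"
  shows "(arccos (sqrt y))^2 \<le> (arccos (sqrt x))^2"
proof -
  have a: "0 \<le> sqrt x" "sqrt y \<le> 1" "sqrt x \<le> sqrt y" "0 \<le> sqrt y" using assms by auto
  have "arccos (sqrt y) \<le> arccos (sqrt x)"
    using arccos_le_arccos[of "sqrt x" "sqrt y"] a by linarith
  moreover have "0 \<le> arccos (sqrt y)" using arccos_lbound[of "sqrt y"] a by linarith
  ultimately show ?thesis by (simp add: power_mono)
qed

lemma compare:
  fixes A1 B1 A2 B2 :: "real^'d^'n" and U1 Sig1 V1 U2 Sig2 V2 :: "real^'d^'d"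
  assumes oA1: "onb_matrix A1 X" and oB1: "onb_matrix B1 Y1"
    and oA2: "onb_matrix A2 X" and oB2: "onb_matrix B2 Y2"
    and s1: "is_svd (transpose A1 ** B1) U1 Sig1 V1"
    and s2: "is_svd (transpose A2 ** B2) U2 Sig2 V2"
    and dom: "\<And>y. y \<in> X \<Longrightarrow> norm (transpose B1 *v y) \<le> norm (transpose B2 *v y)"
  shows "(\<Sum>i\<in>UNIV. (arccos (Sig2$i$i))^2) \<le> (\<Sum>i\<in>UNIV. (arccos (Sig1$i$i))^2)"
proof -
  have A11: "transpose A1 ** A1 = mat 1" and A1X: "span (columns A1) = X"
    using oA1 by (auto simp: onb_matrix_def)
  have A21: "transpose A2 ** A2 = mat 1" and A2X: "span (columns A2) = X"
    using oA2 by (auto simp: onb_matrix_def)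
  have U11: "transpose U1 ** U1 = mat 1" using s1 by (simp add: is_svd_def)
  have U21: "transpose U2 ** U2 = mat 1" using s2 by (simp add: is_svd_def)
  define Q where "Q = transpose A1 ** A2"
  have QQ: "transpose Q ** Q = mat 1"
  proof -
    have "(transpose Q ** Q) *v x = mat 1 *v x" for x
    proof -
      have "A2 *v x \<in> span (columns A1)" using A1X A2X mult_in_span_columns by metis
      then have "A1 *v (transpose A1 *v (A2 *v x)) = A2 *v x" by (rule onb_proj_id[OF A11])
      then have "(transpose Q ** Q) *v x = transpose A2 *v (A2 *v x)"
        by (simp add: Q_def matrix_transpose_mul matrix_vector_mul_assoc[symmetric])
      also have "\<dots> = x" by (simp add: matrix_vector_mul_assoc A21)
      finally show ?thesis by simp
    qed
    then show ?thesis using matrix_eq by blast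
  qed
  define P' where "P' = Q ** U2"
  have P'1: "transpose P' ** P' = mat 1"
  proof -
    have "transpose P' ** P' = transpose U2 ** (transpose Q ** Q) ** U2"
      by (simp add: P'_def matrix_transpose_mul matrix_mul_assoc)
    then show ?thesis using QQ U21 by simp
  qed
  have quad: "(\<Sum>i\<in>UNIV. (Sig1$i$i)^2 * ((transpose U1 *v x)$i)^2)
      \<le> (\<Sum>i\<in>UNIV. (Sig2$i$i)^2 * ((transpose P' *v x)$i)^2)" for x
  proof -
    define y where "y = A1 *v x"
    have yX: "y \<in> X" using A1X mult_in_span_columns y_def by metis
    have "y \<in> span (columns A2)" using yX A2X by simp
    then have py: "A2 *v (transpose A2 *v y) = y" by (rule onb_proj_id[OF A21])
    have e1: "transpose (transpose A1 ** B1) *v x = transpose B1 *v y"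
      by (simp add: y_def matrix_transpose_mul matrix_vector_mul_assoc)
    have e2: "transpose (transpose A2 ** B2) *v (transpose Q *v x) = transpose B2 *v y"
    proof -
      have "transpose (transpose A2 ** B2) *v (transpose Q *v x)
          = transpose B2 *v (A2 *v (transpose A2 *v (A1 *v x)))"
        by (simp add: Q_def matrix_transpose_mul matrix_vector_mul_assoc[symmetric])
      then show ?thesis using py by (simp add: y_def)
    qed
    have tp: "transpose P' *v x = transpose U2 *v (transpose Q *v x)"
      by (simp add: P'_def matrix_transpose_mul matrix_vector_mul_assoc)
    have L: "(\<Sum>i\<in>UNIV. (Sig1$i$i)^2 * ((transpose U1 *v x)$i)^2) = (norm (transpose B1 *v y))^2"
      using svd_form[OF s1, of x] e1 by simp
    have R: "(\<Sum>i\<in>UNIV. (Sig2$i$i)^2 * ((transpose P' *v x)$i)^2) = (norm (transpose B2 *v y))^2"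
      using svd_form[OF s2, of "transpose Q *v x"] e2 tp by simp
    show ?thesis unfolding L R using dom[OF yX] by (intro power_mono) auto
  qed
  have cnt: "card {i. t \<le> (Sig1$i$i)^2} \<le> card {i. t \<le> (Sig2$i$i)^2}" for t
    by (rule count_le[OF U11 sq_inv[OF U11] P'1 sq_inv[OF P'1] quad])
  have R1: "(Sig1$i$i)^2 \<in> {0..1}" for i
    using sig_le1[OF oA1 oB1 s1, of i] by (auto simp: power_le_one)
  have R2: "(Sig2$i$i)^2 \<in> {0..1}" for i
    using sig_le1[OF oA2 oB2 s2, of i] by (auto simp: power_le_one)
  have "(\<Sum>j\<in>UNIV. (arccos (sqrt ((Sig2$j$j)^2)))^2) \<le> (\<Sum>i\<in>UNIV. (arccos (sqrt ((Sig1$i$i)^2)))^2)"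
    by (rule count_sum_aux[where R="{0..1}" and n="CARD('d)"])
       (use arccos_sq_antimono R1 R2 cnt in auto)
  moreover have "sqrt ((Sig1$i$i)^2) = Sig1$i$i" for i using sig_le1[OF oA1 oB1 s1, of i] by simp
  moreover have "sqrt ((Sig2$i$i)^2) = Sig2$i$i" for i using sig_le1[OF oA2 oB2 s2, of i] by simp
  ultimately show ?thesis by simp
qed

lemma gd_spec:
  fixes X Y :: "(real^'n) set"
  assumes "subspace X" "dim X = CARD('d::finite)" "subspace Y" "dim Y = CARD('d)"
  shows "\<exists>(A::real^'d^'n) (B::real^'d^'n) (U::real^'d^'d) Sig V.
      onb_matrix A X \<and> onb_matrix B Y \<and> is_svd (transpose A ** B) U Sig V \<and>
      grassmann_dist TYPE('d) X Y = sqrt (\<Sum>i\<in>UNIV. (arccos (Sig $ i $ i))\<^sup>2)"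
proof -
  obtain A :: "real^'d^'n" where A: "onb_matrix A X" using onb_exists[OF assms(1,2)] by blast
  obtain B :: "real^'d^'n" where B: "onb_matrix B Y" using onb_exists[OF assms(3,4)] by blast
  obtain U Sig V where "is_svd (transpose A ** B) U Sig V" using svd_exists by blast
  then have ex: "\<exists>r. \<exists>(A::real^'d^'n) (B::real^'d^'n) (U::real^'d^'d) Sig V.
      onb_matrix A X \<and> onb_matrix B Y \<and> is_svd (transpose A ** B) U Sig V \<and>
      r = sqrt (\<Sum>i\<in>UNIV. (arccos (Sig $ i $ i))\<^sup>2)" using A B by blast
  show ?thesis using someI_ex[OF ex] unfolding grassmann_dist_def by blast
qed

lemma sub_proj:
  fixes B :: "real^'d^'n" and W :: "real^'e^'n"
  assumes B: "onb_matrix B Y" and W: "onb_matrix W WW" and sub: "Y \<subseteq> WW"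
  shows "transpose B *v y = transpose B *v (W *v (transpose W *v y))"
proof -
  have W1: "transpose W ** W = mat 1" and WWs: "span (columns W) = WW"
    using W by (auto simp: onb_matrix_def)
  have "(transpose B *v y) $ i = (transpose B *v (W *v (transpose W *v y))) $ i" for i
  proof -
    define c where "c = column i B"
    have "c \<in> Y" using B by (auto simp: onb_matrix_def c_def columns_def intro: span_base)
    then have "c \<in> span (columns W)" using sub WWs by auto
    then have cc: "W *v (transpose W *v c) = c" by (rule onb_proj_id[OF W1])
    have "(transpose B *v y) $ i = c \<bullet> y" by (simp add: tmult_comp c_def)
    also have "\<dots> = (W *v (transpose W *v c)) \<bullet> y" using cc by simp
    also have "\<dots> = (transpose W *v c) \<bullet> (transpose W *v y)"
      using dot_transpose[of "transpose W" "transpose W *v c" y] by simp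
    also have "\<dots> = c \<bullet> (W *v (transpose W *v y))" by (rule dot_transpose)
    also have "\<dots> = (transpose B *v (W *v (transpose W *v y))) $ i" by (simp add: tmult_comp c_def)
    finally show ?thesis .
  qed
  then show ?thesis by (simp add: vec_eq_iff)
qed


theorem lemma3:
  fixes WW SS :: "(real^'n) set"
    and W :: "real^'d2::finite^'n"
    and S :: "real^'d1::finite^'n"
    and U :: "real^'d1^'d2"
    and Sig V :: "real^'d1^'d1"
  assumes "subspace WW" "dim WW = CARD('d2)"
    and "subspace SS" "dim SS = CARD('d1)"
    and "CARD('d1) \<le> CARD('d2)"
    and "onb_matrix W WW" and "onb_matrix S SS"
    and "is_svd (transpose W ** S) U Sig V"
  shows "is_subspace_projection TYPE('d1) SS WW (span (columns (W ** U)))"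
proof -
  define S' where "S' = span (columns (W ** U))"
  have W1: "transpose W ** W = mat 1" and WWs: "span (columns W) = WW"
    using assms(6) by (auto simp: onb_matrix_def)
  have S1: "transpose S ** S = mat 1" and SSs: "span (columns S) = SS"
    using assms(7) by (auto simp: onb_matrix_def)
  have U1: "transpose U ** U = mat 1" and svd: "transpose W ** S = U ** Sig ** transpose V"
    using assms(8) by (auto simp: is_svd_def)
  have WU1: "transpose (W ** U) ** (W ** U) = mat 1"
  proof -
    have "transpose (W ** U) ** (W ** U) = transpose U ** (transpose W ** W) ** U"
      by (simp add: matrix_transpose_mul matrix_mul_assoc)
    then show ?thesis using W1 U1 by simp
  qed
  have oS': "onb_matrix (W ** U) S'" by (simp add: onb_matrix_def S'_def WU1)
  have subS': "subspace S'" by (simp add: S'_def)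
  have S'W: "S' \<subseteq> WW"
  proof -
    have "columns (W ** U) \<subseteq> WW"
      using WWs mult_in_span_columns by (auto simp: columns_def column_mult)
    then show ?thesis unfolding S'_def using assms(1) by (rule span_minimal)
  qed
  have dS': "dim S' = CARD('d1)"
    using ortho_cols_facts(3)[OF WU1, of UNIV] by (simp add: S'_def columns_range)
  have proj_in: "W *v (transpose W *v y) \<in> S'" if "y \<in> SS" for y
  proof -
    have "y \<in> span (columns S)" using that SSs by simp
    then have "S *v (transpose S *v y) = y" by (rule onb_proj_id[OF S1])
    then have "transpose W *v y = (transpose W ** S) *v (transpose S *v y)"
      by (metis matrix_vector_mul_assoc)
    also have "\<dots> = U *v ((Sig ** transpose V) *v (transpose S *v y))"
      by (simp add: svd matrix_vector_mul_assoc matrix_mul_assoc)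
    finally have "W *v (transpose W *v y) = W *v (U *v ((Sig ** transpose V) *v (transpose S *v y)))"
      by (rule arg_cong)
    then have "W *v (transpose W *v y) = (W ** U) *v ((Sig ** transpose V) *v (transpose S *v y))"
      using matrix_vector_mul_assoc[of W U "(Sig ** transpose V) *v (transpose S *v y)"] by (rule trans)
    then show ?thesis unfolding S'_def using mult_in_span_columns by metis
  qed
  have "grassmann_dist TYPE('d1) SS S' \<le> grassmann_dist TYPE('d1) SS S''"
    if S'': "subspace S''" "S'' \<subseteq> WW" "dim S'' = CARD('d1)" for S''
  proof -
    obtain A1 B1 :: "real^'d1^'n" and U1 Sig1 V1 :: "real^'d1^'d1" where
      w1: "onb_matrix A1 SS" "onb_matrix B1 S''" "is_svd (transpose A1 ** B1) U1 Sig1 V1"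
        "grassmann_dist TYPE('d1) SS S'' = sqrt (\<Sum>i\<in>UNIV. (arccos (Sig1 $ i $ i))\<^sup>2)"
      using gd_spec[OF assms(3,4) S''(1,3)] by blast
    obtain A2 B2 :: "real^'d1^'n" and U2 Sig2 V2 :: "real^'d1^'d1" where
      w2: "onb_matrix A2 SS" "onb_matrix B2 S'" "is_svd (transpose A2 ** B2) U2 Sig2 V2"
        "grassmann_dist TYPE('d1) SS S' = sqrt (\<Sum>i\<in>UNIV. (arccos (Sig2 $ i $ i))\<^sup>2)"
      using gd_spec[OF assms(3,4) subS' dS'] by blast
    have B11: "transpose B1 ** B1 = mat 1" using w1(2) by (simp add: onb_matrix_def)
    have B21: "transpose B2 ** B2 = mat 1" and B2s: "span (columns B2) = S'"
      using w2(2) by (auto simp: onb_matrix_def)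
    have dom: "norm (transpose B1 *v y) \<le> norm (transpose B2 *v y)" if "y \<in> SS" for y
    proof -
      define z where "z = W *v (transpose W *v y)"
      have zS': "z \<in> S'" using proj_in[OF that] by (simp add: z_def)
      have "norm (transpose B1 *v y) = norm (transpose B1 *v z)"
        using sub_proj[OF w1(2) assms(6) S''(2)] by (simp add: z_def)
      also have "\<dots> \<le> norm z" by (rule norm_onb_tmult_le[OF B11])
      also have "\<dots> = norm (transpose B2 *v z)"
      proof -
        have "z \<in> span (columns B2)" using zS' B2s by simp
        then have "B2 *v (transpose B2 *v z) = z" by (rule onb_proj_id[OF B21])
        then show ?thesis using norm_onb_mult[OF B21, of "transpose B2 *v z"] by simp
      qed
      also have "\<dots> = norm (transpose B2 *v y)"
        using sub_proj[OF w2(2) assms(6) S'W] by (simp add: z_def)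
      finally show ?thesis .
    qed
    have "(\<Sum>i\<in>UNIV. (arccos (Sig2$i$i))^2) \<le> (\<Sum>i\<in>UNIV. (arccos (Sig1$i$i))^2)"
      by (rule compare[OF w1(1,2) w2(1,2) w1(3) w2(3) dom])
    then show ?thesis using w1(4) w2(4) by (simp add: real_sqrt_le_mono)
  qed
  then show ?thesis
    unfolding is_subspace_projection_def using subS' S'W dS' by (auto simp: S'_def)
qed

end
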